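(* Let $R$ be an associative ring with identity and $M$ a left $R$-module which is projective in $\sigma[M]$. Suppose that for every fully invariant submodule $N\leq M$ the factor module $M/N$ has finite uniform dimension. Then the topological space $LgSpec(M)$ is weakly scattered.
   Context: $\Lambda^{fi}(M)$ is the set of fully invariant submodules of $M$. For $N,L\leq M$, $N_ML=\sum\{f(N)\mid f\in\mathrm{Hom}_R(M,L)\}$. $LgSpec(M)$ is the set of submodules $P\neq M$ such that for all $N,L\in\Lambda^{fi}(M)$, $N_ML\subseteq P$ implies $N\subseteq P$ or $L\subseteq P$, with the topology whose open sets are $\{P\in LgSpec(M)\mid N\nsubseteq P\}$, $N\in\Lambda^{fi}(M)$. A topological space $S$ is weakly scattered if every non-empty closed subset $F$ contains a point $x$ that is weakly isolated in $F$, i.e. there is an open set $U$ with $x\in U\cap F\subseteq\overline{\{x\}}$. *)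

theory Defs
  imports "HOL-Algebra.Module" "HOL-Analysis.Abstract_Topology"
begin

(* Left modules over an arbitrary (not necessarily commutative) associative ring
   with identity.  (HOL-Algebra's locale module requires a commutative ring.) *)
definition lmodule :: "'r ring \<Rightarrow> ('r, 'a) module \<Rightarrow> bool" where
  "lmodule R M \<longleftrightarrow> ring R \<and> abelian_group M \<and>
     (\<forall>r\<in>carrier R. \<forall>x\<in>carrier M. smult M r x \<in> carrier M) \<and>
     (\<forall>r\<in>carrier R. \<forall>s\<in>carrier R. \<forall>x\<in>carrier M.
        smult M (add R r s) x = add M (smult M r x) (smult M s x)) \<and>
     (\<forall>r\<in>carrier R. \<forall>x\<in>carrier M. \<forall>y\<in>carrier M.
        smult M r (add M x y) = add M (smult M r x) (smult M r y)) \<and>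
     (\<forall>r\<in>carrier R. \<forall>s\<in>carrier R. \<forall>x\<in>carrier M.
        smult M (mult R r s) x = smult M r (smult M s x)) \<and>
     (\<forall>x\<in>carrier M. smult M (one R) x = x)"

definition lsubmodule :: "'r ring \<Rightarrow> ('r, 'a) module \<Rightarrow> 'a set \<Rightarrow> bool" where
  "lsubmodule R M N \<longleftrightarrow> N \<subseteq> carrier M \<and> zero M \<in> N \<and>
     (\<forall>x\<in>N. \<forall>y\<in>N. add M x y \<in> N) \<and>
     (\<forall>x\<in>N. a_inv M x \<in> N) \<and>
     (\<forall>r\<in>carrier R. \<forall>x\<in>N. smult M r x \<in> N)"

text \<open>Submodule generated by a subset; the sum of a family of submodules is the
  submodule generated by their union.\<close>
definition lspan :: "'r ring \<Rightarrow> ('r, 'a) module \<Rightarrow> 'a set \<Rightarrow> 'a set" where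
  "lspan R M S = \<Inter>{N. lsubmodule R M N \<and> S \<subseteq> N}"

definition lhom :: "'r ring \<Rightarrow> ('r, 'a) module \<Rightarrow> ('r, 'b) module \<Rightarrow> ('a \<Rightarrow> 'b) set" where
  "lhom R M N = {f. (\<forall>x\<in>carrier M. f x \<in> carrier N) \<and>
     (\<forall>x\<in>carrier M. \<forall>y\<in>carrier M. f (add M x y) = add N (f x) (f y)) \<and>
     (\<forall>r\<in>carrier R. \<forall>x\<in>carrier M. f (smult M r x) = smult N r (f x))}"

definition dsum :: "'r ring \<Rightarrow> ('r, 'a) module \<Rightarrow> 'i set \<Rightarrow> ('r, 'i \<Rightarrow> 'a) module" where
  "dsum R M I = \<lparr> carrier = {f. (\<forall>i\<in>I. f i \<in> carrier M) \<and> (\<forall>i. i \<notin> I \<longrightarrow> f i = zero M)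
                               \<and> finite {i. f i \<noteq> zero M}},
                  mult = undefined, one = undefined,
                  zero = (\<lambda>i. zero M),
                  add = (\<lambda>f g i. add M (f i) (g i)),
                  smult = (\<lambda>r f i. smult M r (f i)) \<rparr>"

text \<open>Index sets taken in the type 'b \<times> nat, which is
  large enough up to isomorphism.\<close>
definition in_sigma :: "'r ring \<Rightarrow> ('r, 'a) module \<Rightarrow> ('r, 'b) module \<Rightarrow> bool" where
  "in_sigma R M N \<longleftrightarrow> lmodule R N \<and>
     (\<exists>(I :: ('b \<times> nat) set) U h. lsubmodule R (dsum R M I) U \<and>
        h \<in> lhom R ((dsum R M I)\<lparr>carrier := U\<rparr>) N \<and> h ` U = carrier N)"

text \<open>The test modules range over a fixed type which is large
  enough up to isomorphism.\<close>
definition projective_in_sigma :: "'r ring \<Rightarrow> ('r, 'a) module \<Rightarrow> bool" where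
  "projective_in_sigma R M \<longleftrightarrow>
     (\<forall>(N :: ('r, ('a \<times> nat) \<Rightarrow> 'a) module) (L :: ('r, ('a \<times> nat) \<Rightarrow> 'a) module) g f.
        in_sigma R M N \<and> in_sigma R M L \<and> g \<in> lhom R N L \<and> g ` carrier N = carrier L \<and>
        f \<in> lhom R M L \<longrightarrow> (\<exists>h\<in>lhom R M N. \<forall>x\<in>carrier M. g (h x) = f x))"

definition fully_invariant :: "'r ring \<Rightarrow> ('r, 'a) module \<Rightarrow> 'a set \<Rightarrow> bool" where
  "fully_invariant R M N \<longleftrightarrow> lsubmodule R M N \<and> (\<forall>f\<in>lhom R M M. f ` N \<subseteq> N)"

definition NML :: "'r ring \<Rightarrow> ('r, 'a) module \<Rightarrow> 'a set \<Rightarrow> 'a set \<Rightarrow> 'a set" where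
  "NML R M N L = lspan R M (\<Union>{f ` N | f. f \<in> lhom R M (M\<lparr>carrier := L\<rparr>)})"

definition LgSpec :: "'r ring \<Rightarrow> ('r, 'a) module \<Rightarrow> 'a set set" where
  "LgSpec R M = {P. lsubmodule R M P \<and> P \<noteq> carrier M \<and>
     (\<forall>N L. fully_invariant R M N \<and> fully_invariant R M L \<and> NML R M N L \<subseteq> P
            \<longrightarrow> N \<subseteq> P \<or> L \<subseteq> P)}"

definition LgSpec_top :: "'r ring \<Rightarrow> ('r, 'a) module \<Rightarrow> 'a set topology" where
  "LgSpec_top R M = topology (\<lambda>U. \<exists>N. fully_invariant R M N \<and> U = {P \<in> LgSpec R M. \<not> N \<subseteq> P})"

definition quot_mod :: "'r ring \<Rightarrow> ('r, 'a) module \<Rightarrow> 'a set \<Rightarrow> ('r, 'a set) module" where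
  "quot_mod R M N = \<lparr> carrier = {{add M a n | n. n \<in> N} | a. a \<in> carrier M},
     mult = undefined, one = undefined,
     zero = N,
     add = (\<lambda>X Y. {add M x y | x y. x \<in> X \<and> y \<in> Y}),
     smult = (\<lambda>r X. {add M (smult M r x) n | x n. x \<in> X \<and> n \<in> N}) \<rparr>"

definition finite_udim :: "'r ring \<Rightarrow> ('r, 'a) module \<Rightarrow> bool" where
  "finite_udim R M \<longleftrightarrow> \<not> (\<exists>K :: nat \<Rightarrow> 'a set.
     (\<forall>i. lsubmodule R M (K i) \<and> K i \<noteq> {zero M}) \<and>
     (\<forall>i. K i \<inter> lspan R M (\<Union>j\<in>UNIV - {i}. K j) = {zero M}))"

definition weakly_isolated_in :: "'a topology \<Rightarrow> 'a \<Rightarrow> 'a set \<Rightarrow> bool" where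
  "weakly_isolated_in T x F \<longleftrightarrow> x \<in> F \<and>
     (\<exists>U. openin T U \<and> x \<in> U \<and> U \<inter> F \<subseteq> T closure_of {x})"

definition weakly_scattered :: "'a topology \<Rightarrow> bool" where
  "weakly_scattered T \<longleftrightarrow>
     (\<forall>F. closedin T F \<and> F \<noteq> {} \<longrightarrow> (\<exists>x\<in>F. weakly_isolated_in T x F))"

end

theory Submission
  imports Defs
begin

locale lmod =
  fixes R :: "'r ring" and M :: "('r, 'a) module"
  assumes lm: "lmodule R M"
begin

lemma ag: "abelian_group M" using lm by (simp add: lmodule_def)

sublocale abelian_group M by (rule ag)

lemma sm_closed: "r \<in> carrier R \<Longrightarrow> x \<in> carrier M \<Longrightarrow> smult M r x \<in> carrier M"
  using lm by (simp add: lmodule_def)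

lemma sm_radd: "r \<in> carrier R \<Longrightarrow> x \<in> carrier M \<Longrightarrow> y \<in> carrier M \<Longrightarrow>
   smult M r (x \<oplus>\<^bsub>M\<^esub> y) = smult M r x \<oplus>\<^bsub>M\<^esub> smult M r y"
  using lm by (simp add: lmodule_def)

lemma hom_zero: assumes "f \<in> lhom R M M" shows "f \<zero>\<^bsub>M\<^esub> = \<zero>\<^bsub>M\<^esub>"
proof -
  have c: "f \<zero>\<^bsub>M\<^esub> \<in> carrier M" using assms by (simp add: lhom_def)
  have e: "f (\<zero>\<^bsub>M\<^esub> \<oplus>\<^bsub>M\<^esub> \<zero>\<^bsub>M\<^esub>) = f \<zero>\<^bsub>M\<^esub> \<oplus>\<^bsub>M\<^esub> f \<zero>\<^bsub>M\<^esub>"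
    using assms zero_closed unfolding lhom_def by blast
  then show ?thesis using c by simp
qed

lemma hom_inv: assumes "f \<in> lhom R M M" "x \<in> carrier M" shows "f (\<ominus>\<^bsub>M\<^esub> x) = \<ominus>\<^bsub>M\<^esub> f x"
proof -
  have c: "f x \<in> carrier M" "f (\<ominus>\<^bsub>M\<^esub> x) \<in> carrier M" using assms by (auto simp add: lhom_def)
  have "f (\<ominus>\<^bsub>M\<^esub> x) \<oplus>\<^bsub>M\<^esub> f x = f (\<ominus>\<^bsub>M\<^esub> x \<oplus>\<^bsub>M\<^esub> x)" using assms by (simp add: lhom_def)
  also have "\<dots> = \<zero>\<^bsub>M\<^esub>" using assms hom_zero by (simp add: l_neg)
  finally show ?thesis using c by (metis minus_equality)
qed

lemma hom_add: "f \<in> lhom R M M \<Longrightarrow> x \<in> carrier M \<Longrightarrow> y \<in> carrier M \<Longrightarrow> f (x \<oplus>\<^bsub>M\<^esub> y) = f x \<oplus>\<^bsub>M\<^esub> f y"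
  by (simp add: lhom_def)
lemma hom_sm: "f \<in> lhom R M M \<Longrightarrow> r \<in> carrier R \<Longrightarrow> x \<in> carrier M \<Longrightarrow> f (smult M r x) = smult M r (f x)"
  by (simp add: lhom_def)
lemma hom_closed: "f \<in> lhom R M M \<Longrightarrow> x \<in> carrier M \<Longrightarrow> f x \<in> carrier M"
  by (simp add: lhom_def)

lemma id_hom: "(\<lambda>x. x) \<in> lhom R M M" by (simp add: lhom_def)

lemma comp_hom: "f \<in> lhom R M M \<Longrightarrow> g \<in> lhom R M M \<Longrightarrow> (\<lambda>x. g (f x)) \<in> lhom R M M"
  by (simp add: lhom_def)

definition core :: "'a set set \<Rightarrow> 'a set" where
  "core W = {z \<in> carrier M. \<forall>P\<in>W. \<forall>f\<in>lhom R M M. f z \<in> P}"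

lemma core_lsub: assumes "\<forall>P\<in>W. lsubmodule R M P" shows "lsubmodule R M (core W)"
  unfolding lsubmodule_def
proof (intro conjI ballI)
  show "core W \<subseteq> carrier M" by (auto simp: core_def)
  show "\<zero>\<^bsub>M\<^esub> \<in> core W" using assms by (auto simp: core_def hom_zero lsubmodule_def)
  show "x \<oplus>\<^bsub>M\<^esub> y \<in> core W" if "x \<in> core W" "y \<in> core W" for x y
    using that assms by (auto simp: core_def hom_add lsubmodule_def)
  show "\<ominus>\<^bsub>M\<^esub> x \<in> core W" if "x \<in> core W" for x
    using that assms by (auto simp: core_def hom_inv lsubmodule_def)
  show "smult M r x \<in> core W" if "r \<in> carrier R" "x \<in> core W" for r x
    using that assms by (auto simp: core_def hom_sm sm_closed lsubmodule_def)
qed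

lemma core_fi: assumes "\<forall>P\<in>W. lsubmodule R M P" shows "fully_invariant R M (core W)"
  unfolding fully_invariant_def
proof (intro conjI ballI core_lsub[OF assms])
  fix f assume f: "f \<in> lhom R M M"
  show "f ` core W \<subseteq> core W"
  proof
    fix y assume "y \<in> f ` core W"
    then obtain z where z: "z \<in> core W" "y = f z" by blast
    show "y \<in> core W" unfolding core_def
    proof (intro CollectI conjI ballI)
      show "y \<in> carrier M" using z f by (auto simp: core_def hom_closed)
      fix P g assume "P \<in> W" "g \<in> lhom R M M"
      then show "g y \<in> P" using z comp_hom[OF f, of g] by (auto simp: core_def)
    qed
  qed
qed

lemma core_sub: "P \<in> W \<Longrightarrow> core W \<subseteq> P"
  using id_hom by (auto simp: core_def)

lemma fi_sub_core: "fully_invariant R M X \<Longrightarrow> \<forall>P\<in>W. X \<subseteq> P \<Longrightarrow> X \<subseteq> core W"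
  unfolding core_def fully_invariant_def lsubmodule_def by blast

lemma fi_inter: "fully_invariant R M X \<Longrightarrow> fully_invariant R M Y \<Longrightarrow> fully_invariant R M (X \<inter> Y)"
proof -
  assume a: "fully_invariant R M X" "fully_invariant R M Y"
  have "lsubmodule R M (X \<inter> Y)" using a unfolding fully_invariant_def lsubmodule_def by auto
  moreover have "\<forall>f\<in>lhom R M M. f ` (X \<inter> Y) \<subseteq> X \<inter> Y"
  proof (intro ballI subsetI)
    fix f y assume f: "f \<in> lhom R M M" and "y \<in> f ` (X \<inter> Y)"
    then obtain x where x: "x \<in> X" "x \<in> Y" "y = f x" by blast
    have "f x \<in> X" using a(1) f x(1) unfolding fully_invariant_def by blast
    moreover have "f x \<in> Y" using a(2) f x(2) unfolding fully_invariant_def by blast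
    ultimately show "y \<in> X \<inter> Y" using x(3) by simp
  qed
  ultimately show ?thesis unfolding fully_invariant_def by blast
qed

lemma lsub_carrier: "lsubmodule R M (carrier M)"
  by (auto simp: lsubmodule_def sm_closed)

lemma fi_carrier: "fully_invariant R M (carrier M)"
  by (auto simp: fully_invariant_def lsub_carrier hom_closed)

lemma NML_sub: assumes "fully_invariant R M X" "lsubmodule R M Y"
  shows "NML R M X Y \<subseteq> X \<inter> Y"
proof -
  have "lsubmodule R M (X \<inter> Y)" using assms by (auto simp: fully_invariant_def lsubmodule_def)
  moreover have "\<Union>{f ` X | f. f \<in> lhom R M (M\<lparr>carrier := Y\<rparr>)} \<subseteq> X \<inter> Y"
  proof
    fix y assume "y \<in> \<Union>{f ` X | f. f \<in> lhom R M (M\<lparr>carrier := Y\<rparr>)}"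
    then obtain f x where f: "f \<in> lhom R M (M\<lparr>carrier := Y\<rparr>)" and x: "x \<in> X" and y: "y = f x" by blast
    have "f \<in> lhom R M M" using f assms(2) by (auto simp: lhom_def lsubmodule_def)
    then have "f x \<in> X" using assms(1) x by (auto simp: fully_invariant_def)
    moreover have "f x \<in> Y" using f x assms(1) by (auto simp: lhom_def fully_invariant_def lsubmodule_def)
    ultimately show "y \<in> X \<inter> Y" using y by simp
  qed
  ultimately show ?thesis unfolding NML_def lspan_def by blast
qed

lemma prime_inter: assumes "P \<in> LgSpec R M" "fully_invariant R M X" "fully_invariant R M Y" "X \<inter> Y \<subseteq> P"
  shows "X \<subseteq> P \<or> Y \<subseteq> P"
proof -
  have "NML R M X Y \<subseteq> P" using NML_sub[OF assms(2)] assms(3,4) by (auto simp: fully_invariant_def)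
  then show ?thesis using assms unfolding LgSpec_def by blast
qed

lemma LgSpec_lsub: "P \<in> LgSpec R M \<Longrightarrow> lsubmodule R M P"
  by (simp add: LgSpec_def)

abbreviation "Uo X \<equiv> {P \<in> LgSpec R M. \<not> X \<subseteq> P}"

lemma istop: "istopology (\<lambda>U. \<exists>N. fully_invariant R M N \<and> U = {P \<in> LgSpec R M. \<not> N \<subseteq> P})"
  unfolding istopology_def
proof (intro conjI allI impI)
  fix S T assume "\<exists>N. fully_invariant R M N \<and> S = Uo N" "\<exists>N. fully_invariant R M N \<and> T = Uo N"
  then obtain X Y where X: "fully_invariant R M X" "S = Uo X" and Y: "fully_invariant R M Y" "T = Uo Y" by blast
  have "S \<inter> T = Uo (X \<inter> Y)"
    using X Y prime_inter by blast
  then show "\<exists>N. fully_invariant R M N \<and> S \<inter> T = Uo N" using fi_inter[OF X(1) Y(1)] by blast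
next
  fix K assume K: "\<forall>S\<in>K. \<exists>N. fully_invariant R M N \<and> S = Uo N"
  define Z where "Z = core (LgSpec R M - \<Union>K)"
  have fz: "fully_invariant R M Z" unfolding Z_def by (rule core_fi) (auto simp: LgSpec_lsub)
  have "\<Union>K = Uo Z"
  proof (intro equalityI subsetI)
    fix P assume "P \<in> \<Union>K"
    then obtain S where S: "S \<in> K" "P \<in> S" by blast
    then obtain X where X: "fully_invariant R M X" "S = Uo X" using K by blast
    have "X \<subseteq> Z" unfolding Z_def using X S by (intro fi_sub_core) auto
    then show "P \<in> Uo Z" using S X by auto
  next
    fix P assume "P \<in> Uo Z"
    then show "P \<in> \<Union>K" using core_sub[of P "LgSpec R M - \<Union>K"] unfolding Z_def by blast
  qed
  then show "\<exists>N. fully_invariant R M N \<and> \<Union>K = Uo N" using fz by blast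
qed

lemma openin_iff: "openin (LgSpec_top R M) U \<longleftrightarrow> (\<exists>N. fully_invariant R M N \<and> U = Uo N)"
  unfolding LgSpec_top_def using istop by simp

lemma topspace_eq: "topspace (LgSpec_top R M) = LgSpec R M"
proof -
  have "openin (LgSpec_top R M) (LgSpec R M)"
    unfolding openin_iff using fi_carrier by (intro exI[of _ "carrier M"]) (auto simp: LgSpec_def lsubmodule_def)
  then show ?thesis unfolding topspace_def openin_iff by blast
qed

lemma in_closure: "Q \<in> LgSpec_top R M closure_of {C} \<longleftrightarrow>
   Q \<in> LgSpec R M \<and> (\<forall>Y. fully_invariant R M Y \<and> \<not> Y \<subseteq> Q \<longrightarrow> C \<in> LgSpec R M \<and> \<not> Y \<subseteq> C)"
  unfolding closure_of_def topspace_eq openin_iff by blast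


definition cos :: "'a set \<Rightarrow> 'a \<Rightarrow> 'a set" where
  "cos S a = {a \<oplus>\<^bsub>M\<^esub> n | n. n \<in> S}"

lemma cos_mem: "lsubmodule R M S \<Longrightarrow> a \<in> carrier M \<Longrightarrow> a \<in> cos S a"
  unfolding cos_def lsubmodule_def by (auto intro!: exI[of _ "\<zero>\<^bsub>M\<^esub>"])

lemma cos_eq: assumes "lsubmodule R M S" "a \<in> carrier M" "cos S a = cos S b"
  shows "\<exists>n\<in>S. a = b \<oplus>\<^bsub>M\<^esub> n"
  using cos_mem[OF assms(1,2)] assms(3) unfolding cos_def by auto

lemma cos_eqI: assumes S: "lsubmodule R M S" and b: "b \<in> carrier M" and n: "n \<in> S"
  shows "cos S (b \<oplus>\<^bsub>M\<^esub> n) = cos S b"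
proof -
  have SC: "S \<subseteq> carrier M" using S by (simp add: lsubmodule_def)
  have nc: "n \<in> carrier M" using n SC by blast
  show ?thesis
  proof (intro equalityI subsetI)
    fix x assume "x \<in> cos S (b \<oplus>\<^bsub>M\<^esub> n)"
    then obtain m where m: "m \<in> S" "x = (b \<oplus>\<^bsub>M\<^esub> n) \<oplus>\<^bsub>M\<^esub> m" unfolding cos_def by blast
    have mc: "m \<in> carrier M" using m SC by blast
    have "x = b \<oplus>\<^bsub>M\<^esub> (n \<oplus>\<^bsub>M\<^esub> m)" using m(2) b nc mc by (simp add: a_assoc)
    moreover have "n \<oplus>\<^bsub>M\<^esub> m \<in> S" using S n m(1) by (simp add: lsubmodule_def)
    ultimately show "x \<in> cos S b" unfolding cos_def by blast
  next
    fix x assume "x \<in> cos S b"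
    then obtain k where k: "k \<in> S" "x = b \<oplus>\<^bsub>M\<^esub> k" unfolding cos_def by blast
    have kc: "k \<in> carrier M" using k SC by blast
    have "(b \<oplus>\<^bsub>M\<^esub> n) \<oplus>\<^bsub>M\<^esub> (\<ominus>\<^bsub>M\<^esub> n \<oplus>\<^bsub>M\<^esub> k) = b \<oplus>\<^bsub>M\<^esub> ((n \<oplus>\<^bsub>M\<^esub> \<ominus>\<^bsub>M\<^esub> n) \<oplus>\<^bsub>M\<^esub> k)"
      using b nc kc by (simp add: a_assoc)
    also have "\<dots> = x" using k(2) nc kc by (simp add: r_neg)
    finally have e: "x = (b \<oplus>\<^bsub>M\<^esub> n) \<oplus>\<^bsub>M\<^esub> (\<ominus>\<^bsub>M\<^esub> n \<oplus>\<^bsub>M\<^esub> k)" by simp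
    have "\<ominus>\<^bsub>M\<^esub> n \<oplus>\<^bsub>M\<^esub> k \<in> S" using S n k(1) by (simp add: lsubmodule_def)
    then show "x \<in> cos S (b \<oplus>\<^bsub>M\<^esub> n)" using e unfolding cos_def by blast
  qed
qed

lemma cos_zero: assumes "lsubmodule R M S" shows "cos S \<zero>\<^bsub>M\<^esub> = S"
proof -
  have SC: "S \<subseteq> carrier M" using assms by (simp add: lsubmodule_def)
  have "\<And>n. n \<in> S \<Longrightarrow> \<zero>\<^bsub>M\<^esub> \<oplus>\<^bsub>M\<^esub> n = n" using SC by auto
  then show ?thesis unfolding cos_def by force
qed

lemma q_carrier: "carrier (quot_mod R M S) = cos S ` carrier M"
  unfolding quot_mod_def cos_def by auto

lemma q_zero: "zero (quot_mod R M S) = S"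
  unfolding quot_mod_def by simp

lemma q_add: assumes S: "lsubmodule R M S" and a: "a \<in> carrier M" and b: "b \<in> carrier M"
  shows "add (quot_mod R M S) (cos S a) (cos S b) = cos S (a \<oplus>\<^bsub>M\<^esub> b)"
proof -
  have SC: "S \<subseteq> carrier M" using S by (simp add: lsubmodule_def)
  have "{x \<oplus>\<^bsub>M\<^esub> y | x y. x \<in> cos S a \<and> y \<in> cos S b} = cos S (a \<oplus>\<^bsub>M\<^esub> b)"
  proof (intro equalityI subsetI)
    fix z assume "z \<in> {x \<oplus>\<^bsub>M\<^esub> y | x y. x \<in> cos S a \<and> y \<in> cos S b}"
    then obtain n m where nm: "n \<in> S" "m \<in> S" "z = (a \<oplus>\<^bsub>M\<^esub> n) \<oplus>\<^bsub>M\<^esub> (b \<oplus>\<^bsub>M\<^esub> m)"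
      unfolding cos_def by blast
    have c: "n \<in> carrier M" "m \<in> carrier M" using nm SC by auto
    have "z = (a \<oplus>\<^bsub>M\<^esub> b) \<oplus>\<^bsub>M\<^esub> (n \<oplus>\<^bsub>M\<^esub> m)" using nm(3) a b c by (simp add: a_ac)
    moreover have "n \<oplus>\<^bsub>M\<^esub> m \<in> S" using S nm by (simp add: lsubmodule_def)
    ultimately show "z \<in> cos S (a \<oplus>\<^bsub>M\<^esub> b)" unfolding cos_def by blast
  next
    fix z assume "z \<in> cos S (a \<oplus>\<^bsub>M\<^esub> b)"
    then obtain k where k: "k \<in> S" "z = (a \<oplus>\<^bsub>M\<^esub> b) \<oplus>\<^bsub>M\<^esub> k" unfolding cos_def by blast
    have kc: "k \<in> carrier M" using k SC by auto
    have "z = (a \<oplus>\<^bsub>M\<^esub> k) \<oplus>\<^bsub>M\<^esub> (b \<oplus>\<^bsub>M\<^esub> \<zero>\<^bsub>M\<^esub>)" using k(2) a b kc by (simp add: a_ac)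
    moreover have "a \<oplus>\<^bsub>M\<^esub> k \<in> cos S a" using k unfolding cos_def by blast
    moreover have "b \<oplus>\<^bsub>M\<^esub> \<zero>\<^bsub>M\<^esub> \<in> cos S b" using S unfolding cos_def lsubmodule_def by blast
    ultimately show "z \<in> {x \<oplus>\<^bsub>M\<^esub> y | x y. x \<in> cos S a \<and> y \<in> cos S b}" by blast
  qed
  then show ?thesis unfolding quot_mod_def by simp
qed

lemma q_smult: assumes S: "lsubmodule R M S" and r: "r \<in> carrier R" and a: "a \<in> carrier M"
  shows "smult (quot_mod R M S) r (cos S a) = cos S (smult M r a)"
proof -
  have SC: "S \<subseteq> carrier M" using S by (simp add: lsubmodule_def)
  have "{smult M r x \<oplus>\<^bsub>M\<^esub> n | x n. x \<in> cos S a \<and> n \<in> S} = cos S (smult M r a)"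
  proof (intro equalityI subsetI)
    fix z assume "z \<in> {smult M r x \<oplus>\<^bsub>M\<^esub> n | x n. x \<in> cos S a \<and> n \<in> S}"
    then obtain n m where nm: "n \<in> S" "m \<in> S" "z = smult M r (a \<oplus>\<^bsub>M\<^esub> m) \<oplus>\<^bsub>M\<^esub> n"
      unfolding cos_def by blast
    have c: "n \<in> carrier M" "m \<in> carrier M" using nm SC by auto
    have rm: "smult M r m \<in> S" using S r nm(2) by (simp add: lsubmodule_def)
    have "z = smult M r a \<oplus>\<^bsub>M\<^esub> (smult M r m \<oplus>\<^bsub>M\<^esub> n)"
      using nm(3) a c r by (simp add: sm_radd sm_closed a_assoc)
    moreover have "smult M r m \<oplus>\<^bsub>M\<^esub> n \<in> S" using S nm rm by (simp add: lsubmodule_def)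
    ultimately show "z \<in> cos S (smult M r a)" unfolding cos_def by blast
  next
    fix z assume "z \<in> cos S (smult M r a)"
    then obtain k where k: "k \<in> S" "z = smult M r a \<oplus>\<^bsub>M\<^esub> k" unfolding cos_def by blast
    have "z = smult M r (a \<oplus>\<^bsub>M\<^esub> \<zero>\<^bsub>M\<^esub>) \<oplus>\<^bsub>M\<^esub> k" using k(2) a by simp
    moreover have "a \<oplus>\<^bsub>M\<^esub> \<zero>\<^bsub>M\<^esub> \<in> cos S a" using S unfolding cos_def lsubmodule_def by blast
    ultimately show "z \<in> {smult M r x \<oplus>\<^bsub>M\<^esub> n | x n. x \<in> cos S a \<and> n \<in> S}" using k(1) by blast
  qed
  then show ?thesis unfolding quot_mod_def by simp
qed

lemma q_inv: assumes S: "lsubmodule R M S" and a: "a \<in> carrier M"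
  shows "a_inv (quot_mod R M S) (cos S a) = cos S (\<ominus>\<^bsub>M\<^esub> a)"
proof -
  let ?Q = "quot_mod R M S"
  have SC: "S \<subseteq> carrier M" using S by (simp add: lsubmodule_def)
  have z1: "add ?Q (cos S a) (cos S (\<ominus>\<^bsub>M\<^esub> a)) = zero ?Q"
    using q_add[OF S a] a cos_zero[OF S] by (simp add: r_neg q_zero)
  have z2: "add ?Q (cos S (\<ominus>\<^bsub>M\<^esub> a)) (cos S a) = zero ?Q"
    using q_add[OF S _ a] a cos_zero[OF S] by (simp add: l_neg q_zero)
  have "(THE y. y \<in> carrier ?Q \<and> add ?Q (cos S a) y = zero ?Q \<and> add ?Q y (cos S a) = zero ?Q) = cos S (\<ominus>\<^bsub>M\<^esub> a)"
  proof (rule the_equality)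
    show "cos S (\<ominus>\<^bsub>M\<^esub> a) \<in> carrier ?Q \<and> add ?Q (cos S a) (cos S (\<ominus>\<^bsub>M\<^esub> a)) = zero ?Q \<and>
          add ?Q (cos S (\<ominus>\<^bsub>M\<^esub> a)) (cos S a) = zero ?Q"
      using z1 z2 a by (simp add: q_carrier)
  next
    fix y assume y: "y \<in> carrier ?Q \<and> add ?Q (cos S a) y = zero ?Q \<and> add ?Q y (cos S a) = zero ?Q"
    then obtain b where b: "b \<in> carrier M" "y = cos S b" by (auto simp: q_carrier)
    have "cos S (a \<oplus>\<^bsub>M\<^esub> b) = cos S \<zero>\<^bsub>M\<^esub>" using y b q_add[OF S a b(1)] by (simp add: q_zero cos_zero[OF S])
    then obtain n where n: "n \<in> S" "a \<oplus>\<^bsub>M\<^esub> b = \<zero>\<^bsub>M\<^esub> \<oplus>\<^bsub>M\<^esub> n" using cos_eq[OF S] a b by blast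
    have nc: "n \<in> carrier M" using n SC by auto
    have "b = \<ominus>\<^bsub>M\<^esub> a \<oplus>\<^bsub>M\<^esub> n"
    proof -
      have "\<ominus>\<^bsub>M\<^esub> a \<oplus>\<^bsub>M\<^esub> n = \<ominus>\<^bsub>M\<^esub> a \<oplus>\<^bsub>M\<^esub> (a \<oplus>\<^bsub>M\<^esub> b)" using n(2) nc by simp
      also have "\<dots> = (\<ominus>\<^bsub>M\<^esub> a \<oplus>\<^bsub>M\<^esub> a) \<oplus>\<^bsub>M\<^esub> b" using a b by (simp add: a_assoc)
      also have "\<dots> = b" using a b by (simp add: l_neg)
      finally show ?thesis by simp
    qed
    then show "y = cos S (\<ominus>\<^bsub>M\<^esub> a)" using b cos_eqI[OF S _ n(1), of "\<ominus>\<^bsub>M\<^esub> a"] a by simp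
  qed
  then show ?thesis unfolding a_inv_def m_inv_def by simp
qed

lemma img_lsub: assumes S: "lsubmodule R M S" and X: "lsubmodule R M X"
  shows "lsubmodule R (quot_mod R M S) (cos S ` X)"
proof -
  have XC: "X \<subseteq> carrier M" using X by (simp add: lsubmodule_def)
  show ?thesis unfolding lsubmodule_def
  proof (intro conjI ballI)
    show "cos S ` X \<subseteq> carrier (quot_mod R M S)" using XC unfolding q_carrier by blast
    have "\<zero>\<^bsub>M\<^esub> \<in> X" using X by (simp add: lsubmodule_def)
    then show "zero (quot_mod R M S) \<in> cos S ` X" unfolding q_zero using cos_zero[OF S] by force
    show "add (quot_mod R M S) x y \<in> cos S ` X" if xy: "x \<in> cos S ` X" "y \<in> cos S ` X" for x y
    proof -
      obtain a b where ab: "a \<in> X" "b \<in> X" "x = cos S a" "y = cos S b" using xy by blast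
      have "add (quot_mod R M S) x y = cos S (a \<oplus>\<^bsub>M\<^esub> b)" using ab XC q_add[OF S] by blast
      moreover have "a \<oplus>\<^bsub>M\<^esub> b \<in> X" using X ab by (simp add: lsubmodule_def)
      ultimately show ?thesis by blast
    qed
    show "a_inv (quot_mod R M S) x \<in> cos S ` X" if xy: "x \<in> cos S ` X" for x
    proof -
      obtain a where ab: "a \<in> X" "x = cos S a" using xy by blast
      have "a_inv (quot_mod R M S) x = cos S (\<ominus>\<^bsub>M\<^esub> a)" using ab XC q_inv[OF S] by blast
      moreover have "\<ominus>\<^bsub>M\<^esub> a \<in> X" using X ab by (simp add: lsubmodule_def)
      ultimately show ?thesis by blast
    qed
    show "smult (quot_mod R M S) r x \<in> cos S ` X" if xy: "r \<in> carrier R" "x \<in> cos S ` X" for r x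
    proof -
      obtain a where ab: "a \<in> X" "x = cos S a" using xy by blast
      have "smult (quot_mod R M S) r x = cos S (smult M r a)" using ab XC q_smult[OF S xy(1)] by blast
      moreover have "smult M r a \<in> X" using X ab xy(1) by (simp add: lsubmodule_def)
      ultimately show ?thesis by blast
    qed
  qed
qed

lemma main:
  assumes udim: "\<forall>N. fully_invariant R M N \<longrightarrow> finite_udim R (quot_mod R M N)"
    and Fne: "F \<noteq> {}" and N0: "fully_invariant R M N0" and Fdef: "F = {P \<in> LgSpec R M. N0 \<subseteq> P}"
  shows "\<exists>x\<in>F. weakly_isolated_in (LgSpec_top R M) x F"
proof -
  define good where "good X \<longleftrightarrow> fully_invariant R M X \<and> (\<exists>P\<in>F. \<not> X \<subseteq> P)" for X
  define disj where "disj A B \<longleftrightarrow> (\<forall>P\<in>F. A \<subseteq> P \<or> B \<subseteq> P)" for A B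
  have FL: "F \<subseteq> LgSpec R M" using Fdef by blast
  have Fsub: "\<forall>P\<in>F. lsubmodule R M P" using FL LgSpec_lsub by blast
  show ?thesis
  proof (cases "\<exists>X. good X \<and> (\<forall>A B. good A \<longrightarrow> good B \<longrightarrow> A \<subseteq> X \<longrightarrow> B \<subseteq> X \<longrightarrow> \<not> disj A B)")
    case True
    then obtain X where gX: "good X" and irr: "\<forall>A B. good A \<longrightarrow> good B \<longrightarrow> A \<subseteq> X \<longrightarrow> B \<subseteq> X \<longrightarrow> \<not> disj A B"
      by blast
    have fX: "fully_invariant R M X" using gX good_def by blast
    define W where "W = {P \<in> F. \<not> X \<subseteq> P}"
    define C where "C = core W"
    have Wsub: "\<forall>P\<in>W. lsubmodule R M P" using Fsub W_def by blast
    have fC: "fully_invariant R M C" unfolding C_def using Wsub by (rule core_fi)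
    then have lC: "lsubmodule R M C" by (simp add: fully_invariant_def)
    obtain P0 where P0: "P0 \<in> W" using gX unfolding good_def W_def by blast
    have CP0: "C \<subseteq> P0" unfolding C_def using P0 by (rule core_sub)
    have P0L: "P0 \<in> LgSpec R M" using P0 FL W_def by blast
    have CneM: "C \<noteq> carrier M"
    proof
      assume "C = carrier M"
      then have "carrier M \<subseteq> P0" using CP0 by simp
      moreover have "P0 \<subseteq> carrier M" using LgSpec_lsub[OF P0L] by (simp add: lsubmodule_def)
      ultimately show False using P0L by (simp add: LgSpec_def)
    qed
    have notin: "\<exists>P\<in>W. \<not> A \<subseteq> P" if "fully_invariant R M A" "\<not> A \<subseteq> C" for A
      using fi_sub_core[OF that(1), of W] that(2) unfolding C_def by blast
    have prime: "A \<subseteq> C \<or> B \<subseteq> C" if A: "fully_invariant R M A" and B: "fully_invariant R M B"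
      and AB: "NML R M A B \<subseteq> C" for A B
    proof (rule ccontr)
      assume "\<not> (A \<subseteq> C \<or> B \<subseteq> C)"
      then obtain PA PB where PA: "PA \<in> W" "\<not> A \<subseteq> PA" and PB: "PB \<in> W" "\<not> B \<subseteq> PB"
        using notin A B by blast
      have gA: "good (A \<inter> X)" unfolding good_def
      proof (intro conjI bexI)
        show "fully_invariant R M (A \<inter> X)" using fi_inter[OF A fX] .
        show "PA \<in> F" using PA W_def by blast
        show "\<not> A \<inter> X \<subseteq> PA" using prime_inter[OF _ A fX, of PA] PA W_def FL by blast
      qed
      have gB: "good (B \<inter> X)" unfolding good_def
      proof (intro conjI bexI)
        show "fully_invariant R M (B \<inter> X)" using fi_inter[OF B fX] .
        show "PB \<in> F" using PB W_def by blast
        show "\<not> B \<inter> X \<subseteq> PB" using prime_inter[OF _ B fX, of PB] PB W_def FL by blast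
      qed
      have "\<not> disj (A \<inter> X) (B \<inter> X)" using irr gA gB by blast
      then obtain Q where Q: "Q \<in> F" "\<not> A \<inter> X \<subseteq> Q" "\<not> B \<inter> X \<subseteq> Q" unfolding disj_def by blast
      have QW: "Q \<in> W" using Q W_def by blast
      have "NML R M A B \<subseteq> Q" using AB core_sub[OF QW] unfolding C_def by blast
      then have "A \<subseteq> Q \<or> B \<subseteq> Q" using Q(1) FL A B unfolding LgSpec_def by blast
      then show False using Q by blast
    qed
    have CL: "C \<in> LgSpec R M" unfolding LgSpec_def using lC CneM prime by blast
    have "N0 \<subseteq> C" unfolding C_def using N0 W_def Fdef by (intro fi_sub_core) auto
    then have CF: "C \<in> F" using CL Fdef by blast
    have XC: "\<not> X \<subseteq> C" using CP0 P0 W_def by blast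
    show ?thesis
    proof (intro bexI)
      show "C \<in> F" by (rule CF)
      show "weakly_isolated_in (LgSpec_top R M) C F"
        unfolding weakly_isolated_in_def
      proof (intro conjI exI[of _ "Uo X"])
        show "C \<in> F" by (rule CF)
        show "openin (LgSpec_top R M) (Uo X)" unfolding openin_iff using fX by blast
        show "C \<in> Uo X" using CL XC by blast
        show "Uo X \<inter> F \<subseteq> LgSpec_top R M closure_of {C}"
        proof
          fix Q assume Q: "Q \<in> Uo X \<inter> F"
          then have "Q \<in> W" using W_def by blast
          then have "C \<subseteq> Q" unfolding C_def by (rule core_sub)
          then show "Q \<in> LgSpec_top R M closure_of {C}" unfolding in_closure using Q CL by blast
        qed
      qed
    qed
  next
    case False
    then have B: "\<forall>X. good X \<longrightarrow> (\<exists>A B. good A \<and> good B \<and> A \<subseteq> X \<and> B \<subseteq> X \<and> disj A B)" by blast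
    have "\<forall>X. \<exists>p. good X \<longrightarrow> good (fst p) \<and> good (snd p) \<and> fst p \<subseteq> X \<and> snd p \<subseteq> X \<and> disj (fst p) (snd p)"
    proof
      fix X show "\<exists>p. good X \<longrightarrow> good (fst p) \<and> good (snd p) \<and> fst p \<subseteq> X \<and> snd p \<subseteq> X \<and> disj (fst p) (snd p)"
      proof (cases "good X")
        case True
        then obtain A B where "good A \<and> good B \<and> A \<subseteq> X \<and> B \<subseteq> X \<and> disj A B" using B by blast
        then show ?thesis by (intro exI[of _ "(A, B)"]) simp
      qed simp
    qed
    then have "\<exists>s. \<forall>X. good X \<longrightarrow> good (fst (s X)) \<and> good (snd (s X)) \<and> fst (s X) \<subseteq> X \<and> snd (s X) \<subseteq> X \<and> disj (fst (s X)) (snd (s X))"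
      by (rule choice)
    then obtain s where s: "\<And>X. good X \<Longrightarrow> good (fst (s X)) \<and> good (snd (s X)) \<and> fst (s X) \<subseteq> X \<and> snd (s X) \<subseteq> X \<and> disj (fst (s X)) (snd (s X))"
      by blast
    define Y where "Y n = rec_nat (carrier M) (\<lambda>_ y. snd (s y)) n" for n
    have Y0: "Y 0 = carrier M" by (simp add: Y_def)
    have YS: "Y (Suc n) = snd (s (Y n))" for n by (simp add: Y_def)
    have gY: "good (Y n)" for n
    proof (induction n)
      case 0
      obtain P where P: "P \<in> F" using Fne by blast
      then have "P \<in> LgSpec R M" using FL by blast
      then have "\<not> carrier M \<subseteq> P" using LgSpec_lsub by (auto simp: LgSpec_def lsubmodule_def)
      then show ?case unfolding good_def Y0 using fi_carrier P by blast
    next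
      case (Suc n) then show ?case using s YS by simp
    qed
    define K where "K n = fst (s (Y n))" for n
    have gK: "good (K n)" for n using s gY K_def by simp
    have KY: "K n \<subseteq> Y n" for n using s gY K_def by simp
    have Ydec: "Y (Suc i + k) \<subseteq> Y (Suc i)" for i k
    proof (induction k)
      case (Suc k)
      have "Y (Suc i + Suc k) \<subseteq> Y (Suc i + k)" using s[OF gY[of "Suc i + k"]] YS[of "Suc i + k"] by simp
      then show ?case using Suc by blast
    qed simp
    have disj_mono: "disj A B \<Longrightarrow> B' \<subseteq> B \<Longrightarrow> disj A B'" for A B B'
      unfolding disj_def by blast
    have disjlt: "disj (K i) (K j)" if "i < j" for i j
    proof -
      have "K j \<subseteq> Y (Suc i)" using KY[of j] Ydec[of i "j - Suc i"] that by simp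
      then have "K j \<subseteq> snd (s (Y i))" using YS by simp
      moreover have "disj (K i) (snd (s (Y i)))" using s[OF gY[of i]] K_def by simp
      ultimately show ?thesis using disj_mono by blast
    qed
    have disjK: "\<forall>P\<in>F. K i \<subseteq> P \<or> (\<forall>j. j \<noteq> i \<longrightarrow> K j \<subseteq> P)" for i
    proof (intro ballI)
      fix P assume P: "P \<in> F"
      show "K i \<subseteq> P \<or> (\<forall>j. j \<noteq> i \<longrightarrow> K j \<subseteq> P)"
      proof (cases "K i \<subseteq> P")
        case False
        have "K j \<subseteq> P" if "j \<noteq> i" for j
        proof (cases "i < j")
          case True then show ?thesis using disjlt[OF True] P False unfolding disj_def by blast
        next
          case F2: False then have "j < i" using that by simp
          then show ?thesis using disjlt P False unfolding disj_def by blast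
        qed
        then show ?thesis by blast
      qed simp
    qed
    have fK: "fully_invariant R M (K i)" for i using gK good_def by blast
    have lK: "lsubmodule R M (K i)" for i using fK by (simp add: fully_invariant_def)
    define S where "S = core F"
    have fS: "fully_invariant R M S" unfolding S_def using Fsub by (rule core_fi)
    have lS: "lsubmodule R M S" using fS by (simp add: fully_invariant_def)
    have SC: "S \<subseteq> carrier M" using lS by (simp add: lsubmodule_def)
    let ?Q = "quot_mod R M S"
    define Kq where "Kq i = cos S ` K i" for i
    define T where "T i = core {P \<in> F. \<forall>j. j \<noteq> i \<longrightarrow> K j \<subseteq> P}" for i
    have lT: "lsubmodule R M (T i)" for i unfolding T_def using Fsub by (intro core_lsub) auto
    have TC: "T i \<subseteq> carrier M" for i using lT by (simp add: lsubmodule_def)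
    have KT: "K j \<subseteq> T i" if "j \<noteq> i" for i j
      unfolding T_def using fK that by (intro fi_sub_core) auto
    have KC: "K i \<subseteq> carrier M" for i using lK by (simp add: lsubmodule_def)
    have ex: "\<exists>K :: nat \<Rightarrow> 'a set set.
     (\<forall>i. lsubmodule R ?Q (K i) \<and> K i \<noteq> {zero ?Q}) \<and>
     (\<forall>i. K i \<inter> lspan R ?Q (\<Union>j\<in>UNIV - {i}. K j) = {zero ?Q})"
    proof (intro exI[of _ Kq] conjI allI)
      fix i
      show "lsubmodule R ?Q (Kq i)" unfolding Kq_def by (rule img_lsub[OF lS lK])
      show "Kq i \<noteq> {zero ?Q}"
      proof
        assume eq: "Kq i = {zero ?Q}"
        obtain P where P: "P \<in> F" "\<not> K i \<subseteq> P" using gK good_def by blast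
        then obtain a where a: "a \<in> K i" "a \<notin> P" by blast
        have ac: "a \<in> carrier M" using a KC by blast
        have "cos S a \<in> Kq i" using a Kq_def by blast
        then have "cos S a = S" using eq q_zero by simp
        then have "a \<in> S" using cos_mem[OF lS ac] by simp
        then show False using core_sub[OF P(1)] S_def a by blast
      qed
      have lTq: "lsubmodule R ?Q (cos S ` T i)" by (rule img_lsub[OF lS lT])
      have sp: "lspan R ?Q (\<Union>j\<in>UNIV - {i}. Kq j) \<subseteq> cos S ` T i"
      proof -
        have "(\<Union>j\<in>UNIV - {i}. Kq j) \<subseteq> cos S ` T i" unfolding Kq_def using KT by blast
        then show ?thesis unfolding lspan_def using lTq by blast
      qed
      show "Kq i \<inter> lspan R ?Q (\<Union>j\<in>UNIV - {i}. Kq j) = {zero ?Q}"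
      proof (intro equalityI subsetI)
        fix x assume x: "x \<in> Kq i \<inter> lspan R ?Q (\<Union>j\<in>UNIV - {i}. Kq j)"
        then obtain a where a: "a \<in> K i" "x = cos S a" using Kq_def by blast
        obtain b where b: "b \<in> T i" "x = cos S b" using x sp by blast
        have ac: "a \<in> carrier M" using a KC by blast
        have bc: "b \<in> carrier M" using b TC by blast
        obtain n where n: "n \<in> S" "a = b \<oplus>\<^bsub>M\<^esub> n" using cos_eq[OF lS ac] a b by metis
        have nc: "n \<in> carrier M" using n SC by blast
        have "a \<in> S" unfolding S_def core_def
        proof (intro CollectI conjI ballI)
          show "a \<in> carrier M" by (rule ac)
          fix P f assume P: "P \<in> F" and f: "f \<in> lhom R M M"
          show "f a \<in> P"
          proof (cases "K i \<subseteq> P")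
            case True
            have "f a \<in> K i" using fK[of i] f a(1) unfolding fully_invariant_def by blast
            then show ?thesis using True by blast
          next
            case False
            then have Pin: "P \<in> {P \<in> F. \<forall>j. j \<noteq> i \<longrightarrow> K j \<subseteq> P}" using disjK P by blast
            have fb: "f b \<in> P" using b(1) Pin f unfolding T_def core_def by blast
            have fn: "f n \<in> P" using n(1) P f unfolding S_def core_def by blast
            have "f a = f b \<oplus>\<^bsub>M\<^esub> f n" using n(2) hom_add[OF f bc nc] by simp
            then show ?thesis using fb fn Fsub P by (simp add: lsubmodule_def)
          qed
        qed
        then have "cos S a = S" using cos_eqI[OF lS zero_closed, of a] cos_zero[OF lS] ac by simp
        then show "x \<in> {zero ?Q}" using a q_zero by simp
      next
        fix x assume "x \<in> {zero ?Q}"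
        then have x: "x = S" using q_zero by simp
        have "\<zero>\<^bsub>M\<^esub> \<in> K i" using lK by (simp add: lsubmodule_def)
        then have "cos S \<zero>\<^bsub>M\<^esub> \<in> Kq i" unfolding Kq_def by (rule imageI)
        then have "x \<in> Kq i" using x cos_zero[OF lS] by simp
        moreover have "x \<in> lspan R ?Q (\<Union>j\<in>UNIV - {i}. Kq j)"
          unfolding lspan_def lsubmodule_def using x q_zero by simp
        ultimately show "x \<in> Kq i \<inter> lspan R ?Q (\<Union>j\<in>UNIV - {i}. Kq j)" by blast
      qed
    qed
    have fin: "finite_udim R ?Q" using udim fS by blast
    have False using fin ex unfolding finite_udim_def by (rule notE)
    then show ?thesis by (rule FalseE)
  qed
qed

end

theorem corollary4p33:
  fixes R :: "'r ring" and M :: "('r, 'a) module"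
  assumes "ring R"
    and "lmodule R M"
    and "projective_in_sigma R M"
    and "\<forall>N. fully_invariant R M N \<longrightarrow> finite_udim R (quot_mod R M N)"
  shows "weakly_scattered (LgSpec_top R M)"
proof -
  interpret lmod R M by (rule lmod.intro[OF assms(2)])
  show ?thesis unfolding weakly_scattered_def
  proof (intro allI impI)
    fix F assume F: "closedin (LgSpec_top R M) F \<and> F \<noteq> {}"
    then have FL: "F \<subseteq> LgSpec R M" and op: "openin (LgSpec_top R M) (LgSpec R M - F)"
      unfolding closedin_def topspace_eq by auto
    then obtain N0 where N0: "fully_invariant R M N0" "LgSpec R M - F = Uo N0"
      unfolding openin_iff by blast
    have Fd: "F = {P \<in> LgSpec R M. N0 \<subseteq> P}" using FL N0(2) by blast
    have Fne: "F \<noteq> {}" using F by blast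
    show "\<exists>x\<in>F. weakly_isolated_in (LgSpec_top R M) x F"
      by (rule main[OF assms(4) Fne N0(1) Fd])
  qed
qed

end
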